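(* For every $N\in\mathbb{N}$, $\Delta_{\ell_\infty^N}^{(c)}(R)=R$ for all $R\in[0,\infty)$.
   Context: $\ell_\infty^N$ is $\mathbb{R}^N$ with the max norm. For a cover $\mathcal{U}$ of a metric space $X$: $\mathrm{diam}(\mathcal{U})=\sup_{U\in\mathcal{U}}\mathrm{diam}(U)$; $\mathcal{L}(\mathcal{U})=\sup\{d\in[0,\infty): \text{every } E\subseteq X \text{ with } \mathrm{diam}(E)<d \text{ is contained in some } U\in\mathcal{U}\}$; point-finite means each point lies in only finitely many members. $\Delta_X^{(c)}(R)=\inf\{\mathrm{diam}(\mathcal{U}): \mathcal{U} \text{ point-finite cover of } X,\ \mathcal{L}(\mathcal{U})\geq R\}$. *)

theory Defs
  imports "HOL-Analysis.Analysis"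
begin

text \<open>The max-norm distance on real^'n, i.e. the metric of l_infinity^N with N = CARD('n).\<close>
definition linf_dist :: "real^'n \<Rightarrow> real^'n \<Rightarrow> real" where
  "linf_dist x y = Max (range (\<lambda>i. \<bar>x$i - y$i\<bar>))"

text \<open>Diameter of a set w.r.t. a distance d (value in extended reals; empty set has diameter 0).\<close>
definition set_diam :: "('a \<Rightarrow> 'a \<Rightarrow> real) \<Rightarrow> 'a set \<Rightarrow> ereal" where
  "set_diam d E = Sup ({0} \<union> {ereal (d x y) | x y. x \<in> E \<and> y \<in> E})"

definition cover_diam :: "('a \<Rightarrow> 'a \<Rightarrow> real) \<Rightarrow> 'a set set \<Rightarrow> ereal" where
  "cover_diam d \<U> = Sup (set_diam d ` \<U>)"

definition lebesgue_number :: "'a set \<Rightarrow> ('a \<Rightarrow> 'a \<Rightarrow> real) \<Rightarrow> 'a set set \<Rightarrow> ereal" where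
  "lebesgue_number X d \<U> = Sup {ereal r | r. r \<ge> 0 \<and>
      (\<forall>E. E \<subseteq> X \<and> set_diam d E < ereal r \<longrightarrow> (\<exists>U\<in>\<U>. E \<subseteq> U))}"

definition is_cover :: "'a set \<Rightarrow> 'a set set \<Rightarrow> bool" where
  "is_cover X \<U> \<longleftrightarrow> (\<forall>U\<in>\<U>. U \<subseteq> X) \<and> \<Union>\<U> = X"

definition point_finite :: "'a set \<Rightarrow> 'a set set \<Rightarrow> bool" where
  "point_finite X \<U> \<longleftrightarrow> (\<forall>x\<in>X. finite {U\<in>\<U>. x \<in> U})"

definition Delta_c :: "'a set \<Rightarrow> ('a \<Rightarrow> 'a \<Rightarrow> real) \<Rightarrow> real \<Rightarrow> ereal" where
  "Delta_c X d R = Inf {cover_diam d \<U> | \<U>. is_cover X \<U> \<and> point_finite X \<U>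
      \<and> lebesgue_number X d \<U> \<ge> ereal R}"

end

theory Submission
  imports Defs
begin

lemma linf_dist_le_iff: "linf_dist (x::real^'n) y \<le> c \<longleftrightarrow> (\<forall>i. \<bar>x$i - y$i\<bar> \<le> c)"
  unfolding linf_dist_def by (subst Max_le_iff) auto

lemma comp_le_linf: "\<bar>(x::real^'n)$i - y$i\<bar> \<le> linf_dist x y"
  unfolding linf_dist_def by (rule Max_ge) auto

lemma set_diam_le:
  assumes "c \<ge> 0" "\<And>x y. x \<in> E \<Longrightarrow> y \<in> E \<Longrightarrow> d x y \<le> c"
  shows "set_diam d E \<le> ereal c"
  unfolding set_diam_def using assms by (intro Sup_least) auto

lemma set_diam_ge: "x \<in> E \<Longrightarrow> y \<in> E \<Longrightarrow> ereal (d x y) \<le> set_diam d E"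
  unfolding set_diam_def by (rule Sup_upper) auto

lemma set_diam_nonneg: "0 \<le> set_diam d E"
  unfolding set_diam_def by (rule Sup_upper) auto

lemma lower:
  fixes R :: real
  assumes "R \<ge> 0" and cov: "is_cover (UNIV :: (real^'n) set) \<U>"
    and leb: "lebesgue_number (UNIV :: (real^'n) set) linf_dist \<U> \<ge> ereal R"
  shows "ereal R \<le> cover_diam linf_dist \<U>"
proof (rule dense_le)
  fix y assume y: "y < ereal R"
  obtain U where U: "U \<in> \<U>" using cov unfolding is_cover_def by blast
  have cd: "set_diam linf_dist V \<le> cover_diam linf_dist \<U>" if "V \<in> \<U>" for V
    unfolding cover_diam_def using that by (intro Sup_upper) auto
  show "y \<le> cover_diam linf_dist \<U>"
  proof (cases "y \<le> 0")
    case True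
    then show ?thesis using cd[OF U] set_diam_nonneg[of linf_dist U] by (meson order_trans)
  next
    case False
    then obtain r' where r': "y = ereal r'" "0 < r'" "r' < R"
      using y by (cases y) auto
    have "y < Sup {ereal r | r. r \<ge> 0 \<and>
      (\<forall>E. E \<subseteq> (UNIV :: (real^'n) set) \<and> set_diam linf_dist E < ereal r \<longrightarrow> (\<exists>U\<in>\<U>. E \<subseteq> U))}"
      using y leb unfolding lebesgue_number_def by auto
    then obtain r where r: "y < ereal r" "\<forall>E. E \<subseteq> (UNIV :: (real^'n) set) \<and> set_diam linf_dist E < ereal r \<longrightarrow> (\<exists>U\<in>\<U>. E \<subseteq> U)"
      by (auto simp: less_Sup_iff)
    define c :: "real^'n" where "c = (\<chi> i. r')"
    have "set_diam linf_dist {0, c} \<le> ereal r'"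
      using r' by (intro set_diam_le) (auto simp: linf_dist_le_iff c_def)
    also have "\<dots> < ereal r" using r r' by auto
    finally obtain V where V: "V \<in> \<U>" "{0, c} \<subseteq> V" using r(2) by blast
    have "ereal r' \<le> ereal (linf_dist 0 c)"
      using comp_le_linf[of 0 undefined c] r' by (simp add: c_def)
    also have "\<dots> \<le> set_diam linf_dist V" using V by (intro set_diam_ge) auto
    also have "\<dots> \<le> cover_diam linf_dist \<U>" using cd V by auto
    finally show ?thesis using r' by simp
  qed
qed

lemma floor_mul_bounds:
  fixes t e :: real assumes "e > 0"
  shows "real_of_int \<lfloor>t / e\<rfloor> * e \<le> t" "t < (real_of_int \<lfloor>t / e\<rfloor> + 1) * e"
proof -
  have a: "real_of_int \<lfloor>t / e\<rfloor> \<le> t / e" by (rule of_int_floor_le)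
  have b: "t / e < real_of_int \<lfloor>t / e\<rfloor> + 1" by (rule real_of_int_floor_add_one_gt)
  show "real_of_int \<lfloor>t / e\<rfloor> * e \<le> t" using a assms by (simp add: le_divide_eq)
  show "t < (real_of_int \<lfloor>t / e\<rfloor> + 1) * e" using b by (subst (asm) pos_divide_less_eq[OF assms])
qed

definition cube :: "real \<Rightarrow> real \<Rightarrow> ('n \<Rightarrow> int) \<Rightarrow> (real^'n) set" where
  "cube s L k = {x. \<forall>i. real_of_int (k i) * s \<le> x$i \<and> x$i \<le> real_of_int (k i) * s + L}"

lemma upper:
  fixes R e :: real
  assumes "R \<ge> 0" "e > 0"
  shows "Delta_c (UNIV :: (real^'n) set) linf_dist R \<le> ereal (R + e)"
proof -
  define L where "L = R + e"
  define \<U> where "\<U> = range (cube e L :: ('n \<Rightarrow> int) \<Rightarrow> (real^'n) set)"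
  have cov: "is_cover (UNIV :: (real^'n) set) \<U>"
    unfolding is_cover_def
  proof safe
    fix x :: "real^'n"
    let ?k = "\<lambda>i. \<lfloor>x$i / e\<rfloor>"
    have "x \<in> cube e L ?k"
      unfolding cube_def
    proof safe
      fix i
      note ab = floor_mul_bounds[OF assms(2), of "x$i"]
      from ab(1) show "real_of_int \<lfloor>x$i / e\<rfloor> * e \<le> x$i" .
      from ab(2) have "x$i < (real_of_int \<lfloor>x$i / e\<rfloor> + 1) * e" .
      then show "x$i \<le> real_of_int \<lfloor>x$i / e\<rfloor> * e + L" using assms by (simp add: L_def algebra_simps)
    qed
    then show "x \<in> \<Union>\<U>" unfolding \<U>_def by blast
  qed auto
  have pf: "point_finite (UNIV :: (real^'n) set) \<U>"
    unfolding point_finite_def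
  proof
    fix x :: "real^'n"
    define A where "A = (\<lambda>i::'n. {\<lfloor>(x$i - L)/e\<rfloor> .. \<lceil>x$i / e\<rceil>})"
    have "{U\<in>\<U>. x \<in> U} \<subseteq> cube e L ` (Pi\<^sub>E UNIV A)"
    proof (unfold \<U>_def, safe)
      fix k assume xk: "x \<in> cube e L (k :: 'n \<Rightarrow> int)"
      have "\<forall>i. k i \<in> A i"
      proof (simp add: A_def, intro allI conjI)
        fix i
        have h: "real_of_int (k i) * e \<le> x$i" "x$i \<le> real_of_int (k i) * e + L"
          using xk unfolding cube_def by auto
        from h(1) have "real_of_int (k i) \<le> x$i / e" using assms by (simp add: field_simps)
        then show "k i \<le> \<lceil>x$i / e\<rceil>" by (metis le_of_int_ceiling of_int_le_iff order_trans)
        from h(2) have "(x$i - L) / e \<le> real_of_int (k i)" using assms by (simp add: field_simps)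
        then show "\<lfloor>(x$i - L) / e\<rfloor> \<le> k i" by (simp add: floor_le_iff)
      qed
      then have "k \<in> Pi\<^sub>E UNIV A" by (simp add: PiE_iff)
      then show "cube e L k \<in> cube e L ` (Pi\<^sub>E UNIV A)" by blast
    qed
    moreover have "finite (Pi\<^sub>E UNIV A)" by (intro finite_PiE) (auto simp: A_def)
    ultimately show "finite {U\<in>\<U>. x \<in> U}" by (meson finite_imageI finite_subset)
  qed
  have leb: "lebesgue_number (UNIV :: (real^'n) set) linf_dist \<U> \<ge> ereal R"
    unfolding lebesgue_number_def
  proof (rule Sup_upper, simp, intro exI conjI allI impI)
    show "0 \<le> R" by fact
    fix E :: "(real^'n) set" assume E: "set_diam linf_dist E < ereal R"
    show "\<exists>U\<in>\<U>. E \<subseteq> U"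
    proof (cases "E = {}")
      case True then show ?thesis unfolding \<U>_def by auto
    next
      case False
      then obtain x0 where x0: "x0 \<in> E" by blast
      have dR: "linf_dist x y \<le> R" if "x \<in> E" "y \<in> E" for x y
        using set_diam_ge[OF that, of linf_dist] E by (metis ereal_less_eq(3) le_less_trans less_imp_le)
      define a where "a = (\<lambda>i. Inf ((\<lambda>x. x$i) ` E))"
      have bdd: "bdd_below ((\<lambda>x. x$i) ` E)" for i
      proof (rule bdd_belowI[of _ "x0$i - R"])
        fix t assume "t \<in> (\<lambda>x. x$i) ` E"
        then obtain x where "x \<in> E" "t = x$i" by auto
        then show "x0$i - R \<le> t" using dR[OF x0 \<open>x \<in> E\<close>] comp_le_linf[of x0 i x] by auto
      qed
      have ax: "a i \<le> x$i \<and> x$i \<le> a i + R" if "x \<in> E" for x i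
      proof
        show "a i \<le> x$i" unfolding a_def using that bdd by (intro cInf_lower) auto
        have "x$i - R \<le> a i" unfolding a_def using False
        proof (intro cInf_greatest)
          fix t assume "t \<in> (\<lambda>x. x$i) ` E"
          then obtain y where "y \<in> E" "t = y$i" by auto
          then show "x$i - R \<le> t" using dR[OF that \<open>y \<in> E\<close>] comp_le_linf[of x i y] by auto
        qed auto
        then show "x$i \<le> a i + R" by simp
      qed
      let ?k = "\<lambda>i. \<lfloor>a i / e\<rfloor>"
      have "E \<subseteq> cube e L ?k"
        unfolding cube_def
      proof safe
        fix x i assume "x \<in> E"
        note h = ax[OF this, of i]
        note f = floor_mul_bounds[OF assms(2), of "a i"]
        from f(1) have "real_of_int \<lfloor>a i / e\<rfloor> * e \<le> a i" .
        then show "real_of_int \<lfloor>a i / e\<rfloor> * e \<le> x$i" using h by linarith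
        from f(2) have "a i < (real_of_int \<lfloor>a i / e\<rfloor> + 1) * e" .
        then show "x$i \<le> real_of_int \<lfloor>a i / e\<rfloor> * e + L" using h by (simp add: L_def algebra_simps)
      qed
      then show ?thesis unfolding \<U>_def by blast
    qed
  qed
  have cd: "cover_diam linf_dist \<U> \<le> ereal L"
    unfolding cover_diam_def \<U>_def
  proof (rule Sup_least, clarsimp)
    fix k :: "'n \<Rightarrow> int"
    show "set_diam linf_dist (cube e L k) \<le> ereal L"
    proof (rule set_diam_le)
      show "0 \<le> L" using assms by (simp add: L_def)
      fix x y assume "x \<in> cube e L k" "y \<in> cube e L k"
      then show "linf_dist x y \<le> L" unfolding cube_def linf_dist_le_iff
        by (auto simp: abs_le_iff) (smt (verit))+
    qed
  qed
  have "Delta_c (UNIV :: (real^'n) set) linf_dist R \<le> cover_diam linf_dist \<U>"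
    unfolding Delta_c_def using cov pf leb by (intro Inf_lower) auto
  then show ?thesis using cd by (simp add: L_def)
qed

theorem proposition4p5:
  fixes R :: real
  assumes "R \<ge> 0"
  shows "Delta_c (UNIV :: (real^'n) set) linf_dist R = ereal R"
proof (rule antisym)
  show "Delta_c (UNIV :: (real^'n) set) linf_dist R \<le> ereal R"
    by (rule ereal_le_epsilon2) (use upper[OF assms] in auto)
  show "ereal R \<le> Delta_c (UNIV :: (real^'n) set) linf_dist R"
    unfolding Delta_c_def using lower[OF assms] by (intro Inf_greatest) auto
qed

end
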